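(* Every Boolean self-join-free conjunctive query that has exactly two minimal query plans is linear, i.e., contains no triad.
   Context: Let $Q=\exists\vec x\,(R_1(\vec x_1)\wedge\cdots\wedge R_m(\vec x_m))$ be a Boolean self-join-free conjunctive query. $Q$ is hierarchical if for any two variables $x,y$, with $\mathrm{at}(x)$ the set of atoms containing $x$, $\mathrm{at}(x)\subseteq\mathrm{at}(y)$, $\mathrm{at}(x)\supseteq\mathrm{at}(y)$ or $\mathrm{at}(x)\cap\mathrm{at}(y)=\emptyset$. A dissociation is $\Delta=(\vec y_1,\dots,\vec y_m)$ with $\vec y_i\subseteq\mathrm{var}(Q)\setminus\vec x_i$; $Q^\Delta$ has atoms $R_i^{\vec y_i}(\vec x_i,\vec y_i)$; $\Delta$ is hierarchical if $Q^\Delta$ is. Order dissociations by $\Delta\preceq\Delta'$ iff $\vec y_i\subseteq\vec y'_i$ for all $i$. The minimal query plans of $Q$ correspond one-to-one to the minimal hierarchical dissociations. An atom is independent if no other atom has a variable set that is a strict subset of its variable set. A path between atoms $R_1,R_p$ is an alternating sequence $R_1-\vec y_1-R_2-\cdots-\vec y_{p-1}-R_p$ with consecutive atoms sharing the nonempty variable sets $\vec y_i$. A triad is a set of three independent atoms $\{R_1,R_2,R_3\}$ such that for each pair $i\ne j$ there is a path from $R_i$ to $R_j$ using no variable of the third atom. $Q$ is linear if it has no triad. *)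

theory Defs
  imports Main
begin

text \<open>A Boolean self-join-free conjunctive query with m atoms is represented by
  the variable sets X 0, ..., X (m-1) of its atoms R_1,...,R_m (indices i < m).
  Since the query is self-join-free, every atom has its own relation symbol,
  so the atom is identified with its index.\<close>

definition qvars :: "nat \<Rightarrow> (nat \<Rightarrow> 'v set) \<Rightarrow> 'v set" where
  "qvars m X = (\<Union>i<m. X i)"

definition atoms_of :: "nat \<Rightarrow> (nat \<Rightarrow> 'v set) \<Rightarrow> 'v \<Rightarrow> nat set" where
  "atoms_of m X x = {i. i < m \<and> x \<in> X i}"

definition hierarchical :: "nat \<Rightarrow> (nat \<Rightarrow> 'v set) \<Rightarrow> bool" where
  "hierarchical m X \<longleftrightarrow>
     (\<forall>x\<in>qvars m X. \<forall>y\<in>qvars m X.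
        atoms_of m X x \<subseteq> atoms_of m X y \<or> atoms_of m X y \<subseteq> atoms_of m X x \<or>
        atoms_of m X x \<inter> atoms_of m X y = {})"

definition dissociation :: "nat \<Rightarrow> (nat \<Rightarrow> 'v set) \<Rightarrow> (nat \<Rightarrow> 'v set) \<Rightarrow> bool" where
  "dissociation m X Y \<longleftrightarrow>
     (\<forall>i<m. Y i \<subseteq> qvars m X - X i) \<and> (\<forall>i\<ge>m. Y i = {})"

definition dissociated :: "(nat \<Rightarrow> 'v set) \<Rightarrow> (nat \<Rightarrow> 'v set) \<Rightarrow> (nat \<Rightarrow> 'v set)" where
  "dissociated X Y = (\<lambda>i. X i \<union> Y i)"

definition hier_dissociation :: "nat \<Rightarrow> (nat \<Rightarrow> 'v set) \<Rightarrow> (nat \<Rightarrow> 'v set) \<Rightarrow> bool" where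
  "hier_dissociation m X Y \<longleftrightarrow> dissociation m X Y \<and> hierarchical m (dissociated X Y)"

definition diss_le :: "nat \<Rightarrow> (nat \<Rightarrow> 'v set) \<Rightarrow> (nat \<Rightarrow> 'v set) \<Rightarrow> bool" where
  "diss_le m Y Y' \<longleftrightarrow> (\<forall>i<m. Y i \<subseteq> Y' i)"

definition minimal_hier_dissociation :: "nat \<Rightarrow> (nat \<Rightarrow> 'v set) \<Rightarrow> (nat \<Rightarrow> 'v set) \<Rightarrow> bool" where
  "minimal_hier_dissociation m X Y \<longleftrightarrow>
     hier_dissociation m X Y \<and>
     (\<forall>Y'. hier_dissociation m X Y' \<and> diss_le m Y' Y \<longrightarrow> Y' = Y)"

definition independent_atom :: "nat \<Rightarrow> (nat \<Rightarrow> 'v set) \<Rightarrow> nat \<Rightarrow> bool" where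
  "independent_atom m X i \<longleftrightarrow> i < m \<and> \<not> (\<exists>j<m. j \<noteq> i \<and> X j \<subset> X i)"

text \<open>A path R_{a 0} - ys 0 - R_{a 1} - ... - ys (p-2) - R_{a (p-1)} from atom i to atom j
  in which the shared variable sets avoid the variable set Z.\<close>
definition path_avoiding :: "nat \<Rightarrow> (nat \<Rightarrow> 'v set) \<Rightarrow> 'v set \<Rightarrow> nat \<Rightarrow> nat \<Rightarrow> bool" where
  "path_avoiding m X Z i j \<longleftrightarrow>
     (\<exists>(p::nat) (a::nat \<Rightarrow> nat) (ys::nat \<Rightarrow> 'v set).
        p \<ge> 2 \<and> a 0 = i \<and> a (p - 1) = j \<and> (\<forall>k<p. a k < m) \<and>
        (\<forall>k. Suc k < p \<longrightarrow>
           ys k \<noteq> {} \<and> ys k \<subseteq> X (a k) \<inter> X (a (Suc k)) \<and> ys k \<inter> Z = {}))"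

definition triad :: "nat \<Rightarrow> (nat \<Rightarrow> 'v set) \<Rightarrow> nat \<Rightarrow> nat \<Rightarrow> nat \<Rightarrow> bool" where
  "triad m X r1 r2 r3 \<longleftrightarrow>
     r1 \<noteq> r2 \<and> r2 \<noteq> r3 \<and> r1 \<noteq> r3 \<and>
     independent_atom m X r1 \<and> independent_atom m X r2 \<and> independent_atom m X r3 \<and>
     path_avoiding m X (X r3) r1 r2 \<and>
     path_avoiding m X (X r1) r2 r3 \<and>
     path_avoiding m X (X r2) r1 r3"

definition linear_query :: "nat \<Rightarrow> (nat \<Rightarrow> 'v set) \<Rightarrow> bool" where
  "linear_query m X \<longleftrightarrow> \<not> (\<exists>r1 r2 r3. triad m X r1 r2 r3)"

end

theory Submission
  imports Defs
begin

lemma path_common: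
  assumes h: "hierarchical m D"
  shows "(\<forall>l\<le>Suc n. a l < m) \<Longrightarrow> (\<forall>k\<le>n. vs k \<in> D (a k) \<and> vs k \<in> D (a (Suc k)))
     \<Longrightarrow> \<exists>k\<le>n. \<forall>l\<le>Suc n. vs k \<in> D (a l)"
proof (induction n)
  case 0
  then show ?case by (auto simp: le_Suc_eq)
next
  case (Suc n)
  then obtain k where k: "k \<le> n" "\<forall>l\<le>Suc n. vs k \<in> D (a l)" by auto
  have am: "\<forall>l\<le>Suc (Suc n). a l < m" using Suc.prems by auto
  have q1: "vs k \<in> qvars m D" using k am unfolding qvars_def by (metis UN_I le_Suc_eq lessThan_iff zero_le)
  have v2: "vs (Suc n) \<in> D (a (Suc n))" "vs (Suc n) \<in> D (a (Suc (Suc n)))" using Suc.prems by auto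
  have q2: "vs (Suc n) \<in> qvars m D" using v2 am unfolding qvars_def by (metis UN_I le_refl le_SucI lessThan_iff)
  have c1: "a (Suc n) \<in> atoms_of m D (vs k)" using k am unfolding atoms_of_def by auto
  have c2: "a (Suc n) \<in> atoms_of m D (vs (Suc n))" using v2 am unfolding atoms_of_def by auto
  have "atoms_of m D (vs k) \<subseteq> atoms_of m D (vs (Suc n)) \<or> atoms_of m D (vs (Suc n)) \<subseteq> atoms_of m D (vs k)"
    using h q1 q2 c1 c2 unfolding hierarchical_def by blast
  then show ?case
  proof
    assume sub: "atoms_of m D (vs k) \<subseteq> atoms_of m D (vs (Suc n))"
    have "\<forall>l\<le>Suc (Suc n). vs (Suc n) \<in> D (a l)"
    proof (intro allI impI)
      fix l assume l: "l \<le> Suc (Suc n)"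
      show "vs (Suc n) \<in> D (a l)"
      proof (cases "l = Suc (Suc n)")
        case True then show ?thesis using v2 by simp
      next
        case False
        then have "l \<le> Suc n" using l by simp
        then have "a l \<in> atoms_of m D (vs k)" using k am unfolding atoms_of_def by auto
        then show ?thesis using sub unfolding atoms_of_def by auto
      qed
    qed
    then show ?thesis by auto
  next
    assume sub: "atoms_of m D (vs (Suc n)) \<subseteq> atoms_of m D (vs k)"
    have "a (Suc (Suc n)) \<in> atoms_of m D (vs (Suc n))" using v2 am unfolding atoms_of_def by auto
    then have "vs k \<in> D (a (Suc (Suc n)))" using sub unfolding atoms_of_def by auto
    then have "\<forall>l\<le>Suc (Suc n). vs k \<in> D (a l)" using k by (auto simp: le_Suc_eq)
    then show ?thesis using k by (intro exI[of _ k]) auto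
  qed
qed

lemma path_var:
  assumes h: "hierarchical m D" and sub: "\<forall>i<m. X i \<subseteq> D i"
    and p: "path_avoiding m X Z i j"
  shows "\<exists>v. v \<in> D i \<and> v \<in> D j \<and> v \<notin> Z \<and> i < m \<and> j < m"
proof -
  obtain p a ys where P: "p \<ge> 2" "a 0 = i" "a (p - 1) = j" "\<forall>k<p. a k < m"
    "\<forall>k. Suc k < p \<longrightarrow> ys k \<noteq> {} \<and> ys k \<subseteq> X (a k) \<inter> X (a (Suc k)) \<and> ys k \<inter> Z = {}"
    using p unfolding path_avoiding_def by blast
  obtain n where n: "p = Suc (Suc n)" using P(1) by (metis add_2_eq_Suc le_Suc_ex)
  define vs where "vs k = (SOME v. v \<in> ys k)" for k
  have vsy: "\<And>k. k \<le> n \<Longrightarrow> vs k \<in> ys k"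
    unfolding vs_def using P(5) n by (metis Suc_le_mono less_Suc_eq_le some_in_eq)
  have am: "\<forall>l\<le>Suc n. a l < m" using P(4) n by auto
  have "\<forall>k\<le>n. vs k \<in> D (a k) \<and> vs k \<in> D (a (Suc k))"
  proof (intro allI impI)
    fix k assume k: "k \<le> n"
    have "ys k \<subseteq> X (a k) \<inter> X (a (Suc k))" using P(5) n k by auto
    moreover have "a k < m" "a (Suc k) < m" using am k by auto
    ultimately show "vs k \<in> D (a k) \<and> vs k \<in> D (a (Suc k))" using vsy[OF k] sub by blast
  qed
  from path_common[OF h am this] obtain k where k: "k \<le> n" "\<forall>l\<le>Suc n. vs k \<in> D (a l)" by blast
  have "ys k \<inter> Z = {}" using P(5) n k(1) by simp
  then have "vs k \<notin> Z" using vsy[OF k(1)] by blast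
  moreover have "vs k \<in> D i" using k P(2) by (metis zero_le)
  moreover have "vs k \<in> D j" using k P(3) n by auto
  moreover have "i < m" "j < m" using P n by auto
  ultimately show ?thesis by blast
qed

lemma no_two:
  assumes h: "hierarchical m D" and "a < m" and "b < m"
    and v1: "v1 \<in> D b" "v1 \<in> D c" "v1 \<notin> D a" "c < m"
    and v2: "v2 \<in> D a" "v2 \<in> D c" "v2 \<notin> D b"
  shows False
proof -
  have q1: "v1 \<in> qvars m D" using v1 unfolding qvars_def by auto
  have q2: "v2 \<in> qvars m D" using v2 assms unfolding qvars_def by auto
  have "c \<in> atoms_of m D v1 \<inter> atoms_of m D v2" using v1 v2 unfolding atoms_of_def by auto
  then have "atoms_of m D v1 \<subseteq> atoms_of m D v2 \<or> atoms_of m D v2 \<subseteq> atoms_of m D v1"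
    using h q1 q2 unfolding hierarchical_def by blast
  moreover have "b \<in> atoms_of m D v1" "b \<notin> atoms_of m D v2"
    "a \<in> atoms_of m D v2" "a \<notin> atoms_of m D v1" using assms unfolding atoms_of_def by auto
  ultimately show False by blast
qed

lemma not_both_empty:
  assumes hd: "hier_dissociation m X Y"
    and pa: "path_avoiding m X (X a) b c \<or> path_avoiding m X (X a) c b"
      "path_avoiding m X (X b) a c \<or> path_avoiding m X (X b) c a"
    and ya: "Y a = {}" and yb: "Y b = {}"
  shows False
proof -
  let ?D = "dissociated X Y"
  have h: "hierarchical m ?D" using hd unfolding hier_dissociation_def by simp
  have sub: "\<forall>i<m. X i \<subseteq> ?D i" unfolding dissociated_def by auto
  obtain v1 where v1: "v1 \<in> ?D b" "v1 \<in> ?D c" "v1 \<notin> X a" "b < m" "c < m"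
    using pa(1) path_var[OF h sub, of "X a" b c] path_var[OF h sub, of "X a" c b] by blast
  obtain v2 where v2: "v2 \<in> ?D a" "v2 \<in> ?D c" "v2 \<notin> X b" "a < m"
    using pa(2) path_var[OF h sub, of "X b" a c] path_var[OF h sub, of "X b" c a] by blast
  have "?D a = X a" "?D b = X b" using ya yb unfolding dissociated_def by auto
  then show False using no_two[OF h v2(4) v1(4) v1(1,2) _ v1(5) v2(1,2)] v1 v2 by simp
qed

lemma full_hier:
  assumes r: "r < m"
  shows "hier_dissociation m X (\<lambda>j. if j < m \<and> j \<noteq> r then qvars m X - X j else {})"
    (is "hier_dissociation m X ?F")
proof -
  have xq: "\<And>j. j < m \<Longrightarrow> X j \<subseteq> qvars m X" unfolding qvars_def by auto
  have dis: "dissociation m X ?F" unfolding dissociation_def by auto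
  let ?D = "dissociated X ?F"
  have Dq: "\<And>j. j < m \<Longrightarrow> ?D j \<subseteq> qvars m X" using xq unfolding dissociated_def by auto
  have qq: "qvars m ?D \<subseteq> qvars m X" using Dq unfolding qvars_def by auto
  have at: "\<And>x. x \<in> qvars m X \<Longrightarrow> atoms_of m ?D x = {j. j < m \<and> j \<noteq> r} \<union> {j. j = r \<and> x \<in> X r}"
    using r xq unfolding atoms_of_def dissociated_def by auto
  have "hierarchical m ?D"
    unfolding hierarchical_def
  proof (intro ballI)
    fix x y assume x: "x \<in> qvars m ?D" and y: "y \<in> qvars m ?D"
    then have "x \<in> qvars m X" "y \<in> qvars m X" using qq by auto
    then show "atoms_of m ?D x \<subseteq> atoms_of m ?D y \<or> atoms_of m ?D y \<subseteq> atoms_of m ?D x \<or>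
        atoms_of m ?D x \<inter> atoms_of m ?D y = {}"
      using at by (cases "x \<in> X r"; cases "y \<in> X r") auto
  qed
  then show ?thesis using dis unfolding hier_dissociation_def by simp
qed

lemma exists_minimal:
  assumes fin: "\<forall>i<m. finite (X i)" and h: "hier_dissociation m X F"
  shows "\<exists>M. minimal_hier_dissociation m X M \<and> diss_le m M F"
proof -
  let ?P = "\<lambda>Y. hier_dissociation m X Y \<and> diss_le m Y F"
  let ?mu = "\<lambda>Y. \<Sum>j<m. card (Y j)"
  have "?P F" using h unfolding diss_le_def by auto
  from ex_has_least_nat[of ?P F ?mu, OF this] obtain M where
    M: "?P M" "\<forall>Y. ?P Y \<longrightarrow> ?mu M \<le> ?mu Y" by blast
  have finq: "finite (qvars m X)" using fin unfolding qvars_def by auto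
  have finM: "\<And>j. j < m \<Longrightarrow> finite (M j)"
    using M(1) finq unfolding hier_dissociation_def dissociation_def
    by (meson Diff_subset finite_subset subset_trans)
  have "\<forall>Y'. hier_dissociation m X Y' \<and> diss_le m Y' M \<longrightarrow> Y' = M"
  proof (intro allI impI)
    fix Y' assume a: "hier_dissociation m X Y' \<and> diss_le m Y' M"
    then have "?P Y'" using M(1) unfolding diss_le_def by blast
    then have le: "?mu M \<le> ?mu Y'" using M(2) by blast
    have sub: "\<forall>j<m. Y' j \<subseteq> M j" using a unfolding diss_le_def by auto
    have eq: "\<forall>j<m. Y' j = M j"
    proof (rule ccontr)
      assume "\<not> (\<forall>j<m. Y' j = M j)"
      then obtain j where j: "j < m" "Y' j \<noteq> M j" by auto
      have "card (Y' j) < card (M j)" using j sub finM by (meson psubset_card_mono psubsetI)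
      moreover have "\<forall>i\<in>{..<m}. card (Y' i) \<le> card (M i)" using sub finM by (simp add: card_mono)
      ultimately have "?mu Y' < ?mu M" using j
        by (intro sum_strict_mono_ex1) auto
      then show False using le by simp
    qed
    have "\<forall>j\<ge>m. Y' j = {} \<and> M j = {}" using a M(1)
      unfolding hier_dissociation_def dissociation_def by auto
    then show "Y' = M" using eq by (metis ext not_le)
  qed
  then show ?thesis using M(1) unfolding minimal_hier_dissociation_def by blast
qed

lemma minimal_for_atom:
  assumes fin: "\<forall>i<m. finite (X i)" and r: "r < m"
  shows "\<exists>M. minimal_hier_dissociation m X M \<and> M r = {}"
proof -
  obtain M where M: "minimal_hier_dissociation m X M"
    "diss_le m M (\<lambda>j. if j < m \<and> j \<noteq> r then qvars m X - X j else {})"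
    using exists_minimal[OF fin full_hier[OF r]] by blast
  then have "M r = {}" using r unfolding diss_le_def by fastforce
  then show ?thesis using M by blast
qed

theorem mainTheorem10:
  fixes m :: nat and X :: "nat \<Rightarrow> 'v set"
  assumes "\<forall>i<m. finite (X i)"
    and "card {Y. minimal_hier_dissociation m X Y} = 2"
  shows "linear_query m X"
proof (rule ccontr)
  assume "\<not> linear_query m X"
  then obtain r1 r2 r3 where t: "triad m X r1 r2 r3" unfolding linear_query_def by blast
  then have d: "r1 \<noteq> r2" "r2 \<noteq> r3" "r1 \<noteq> r3" "r1 < m" "r2 < m" "r3 < m"
    and p12: "path_avoiding m X (X r3) r1 r2"
    and p23: "path_avoiding m X (X r1) r2 r3"
    and p13: "path_avoiding m X (X r2) r1 r3"
    unfolding triad_def independent_atom_def by auto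
  obtain M1 where M1: "minimal_hier_dissociation m X M1" "M1 r1 = {}" using minimal_for_atom[OF assms(1) d(4)] by blast
  obtain M2 where M2: "minimal_hier_dissociation m X M2" "M2 r2 = {}" using minimal_for_atom[OF assms(1) d(5)] by blast
  obtain M3 where M3: "minimal_hier_dissociation m X M3" "M3 r3 = {}" using minimal_for_atom[OF assms(1) d(6)] by blast
  have h1: "hier_dissociation m X M1" using M1 unfolding minimal_hier_dissociation_def by simp
  have h2: "hier_dissociation m X M2" using M2 unfolding minimal_hier_dissociation_def by simp
  have "M1 \<noteq> M2"
  proof
    assume "M1 = M2"
    then show False using not_both_empty[OF h1 _ _ M1(2), of r2 r3] p23 p13 M2(2) by simp
  qed
  moreover have "M2 \<noteq> M3"
  proof
    assume "M2 = M3"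
    then show False using not_both_empty[OF h2 _ _ M2(2), of r3 r1] p13 p12 M3(2) by simp
  qed
  moreover have "M1 \<noteq> M3"
  proof
    assume "M1 = M3"
    then show False using not_both_empty[OF h1 _ _ M1(2), of r3 r2] p12 p23 M3(2) by simp
  qed
  moreover have "finite {Y. minimal_hier_dissociation m X Y}" using assms(2) card.infinite by fastforce
  ultimately have "card {M1, M2, M3} \<le> card {Y. minimal_hier_dissociation m X Y}"
    using M1 M2 M3 by (intro card_mono) auto
  moreover have "card {M1, M2, M3} = 3" using \<open>M1 \<noteq> M2\<close> \<open>M2 \<noteq> M3\<close> \<open>M1 \<noteq> M3\<close> by simp
  ultimately show False using assms(2) by simp
qed

end
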